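(* Let $G=\langle N,S,P\rangle$ and $G'=\langle N',S',P'\rangle$ be normal-form games with $G\sqsubseteq G'$. Let $i\in N$, and let $\sigma,\sigma'$ be mixed strategy profiles of $G,G'$ respectively with $\sigma\sim\sigma'$. Then $h_i(\sigma)=h'_i(\sigma')$, where $h_i,h'_i$ are the payoff functions of player $i$ in $G,G'$.
   Context: A normal-form game $G=\langle N,S,P\rangle$ has a finite set of players $N$, for each $i\in N$ a finite set of pure strategies $S_i$, $S=\times_{i\in N}S_i$, and payoffs $P_i:S\to\mathbb{R}$. A mixed strategy profile $\sigma=(\sigma_i)_{i\in N}$ assigns to each $i$ a probability distribution $\sigma_i=(\sigma_{ij})_{j\in S_i}$ on $S_i$; the payoff of $i$ is $h_i(\sigma)=\sum_{s\in S}P_i(s)\prod_{k\in N}\sigma_{k,s_k}$. $NE(G)$ is the set of mixed Nash equilibria. For games $G=\langle N,S,P\rangle$, $G'=\langle N',S',P'\rangle$ and profiles $\sigma$ of $G$, $\sigma'$ of $G'$, $\sigma\sim\sigma'$ (compatible) iff $\sigma_{ij}=\sigma'_{ij}$ for all $i\in N\cap N'$ and $j\in S_i\cap S'_i$. $G'$ is an inflated version of $G$, written $G\sqsubseteq G'$, iff: $N\subseteq N'$; $S_i\subseteq S'_i$ for all $i\in N$; $P_i(s)=P'_i(s')$ whenever $i\in N$, $s\in S$, $s'\in S'$ and $s_j=s'_j$ for all $j\in N$; for every $\sigma\in NE(G)$ there is $\sigma'\in NE(G')$ with $\sigma\sim\sigma'$; and for every $\sigma'\in NE(G')$ there is $\sigma\in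 NE(G)$ with $\sigma\sim\sigma'$. *)

theory Defs
  imports Complex_Main "HOL-Library.FuncSet"
begin

record ('p, 's) game =
  players :: "'p set"
  strats  :: "'p \<Rightarrow> 's set"
  payoff  :: "'p \<Rightarrow> ('p \<Rightarrow> 's) \<Rightarrow> real"

definition profiles :: "('p, 's) game \<Rightarrow> ('p \<Rightarrow> 's) set" where
  "profiles G = PiE (players G) (strats G)"

definition nf_game :: "('p, 's) game \<Rightarrow> bool" where
  "nf_game G \<longleftrightarrow> finite (players G) \<and>
     (\<forall>i\<in>players G. finite (strats G i) \<and> strats G i \<noteq> {})"

definition mixed_strategy :: "('p, 's) game \<Rightarrow> 'p \<Rightarrow> ('s \<Rightarrow> real) \<Rightarrow> bool" where
  "mixed_strategy G i t \<longleftrightarrow> (\<forall>j\<in>strats G i. t j \<ge> 0) \<and> (\<Sum>j\<in>strats G i. t j) = 1"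

definition mixed_profile :: "('p, 's) game \<Rightarrow> ('p \<Rightarrow> 's \<Rightarrow> real) \<Rightarrow> bool" where
  "mixed_profile G \<sigma> \<longleftrightarrow> (\<forall>i\<in>players G. mixed_strategy G i (\<sigma> i))"

definition exp_payoff :: "('p, 's) game \<Rightarrow> 'p \<Rightarrow> ('p \<Rightarrow> 's \<Rightarrow> real) \<Rightarrow> real" where
  "exp_payoff G i \<sigma> = (\<Sum>s\<in>profiles G. payoff G i s * (\<Prod>k\<in>players G. \<sigma> k (s k)))"

definition nash_eq :: "('p, 's) game \<Rightarrow> ('p \<Rightarrow> 's \<Rightarrow> real) set" where
  "nash_eq G = {\<sigma>. mixed_profile G \<sigma> \<and>
     (\<forall>i\<in>players G. \<forall>t. mixed_strategy G i t \<longrightarrow>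
        exp_payoff G i (\<sigma>(i := t)) \<le> exp_payoff G i \<sigma>)}"

definition compatible ::
  "('p, 's) game \<Rightarrow> ('p, 's) game \<Rightarrow> ('p \<Rightarrow> 's \<Rightarrow> real) \<Rightarrow> ('p \<Rightarrow> 's \<Rightarrow> real) \<Rightarrow> bool" where
  "compatible G G' \<sigma> \<sigma>' \<longleftrightarrow>
     (\<forall>i\<in>players G \<inter> players G'. \<forall>j\<in>strats G i \<inter> strats G' i. \<sigma> i j = \<sigma>' i j)"

definition inflated :: "('p, 's) game \<Rightarrow> ('p, 's) game \<Rightarrow> bool" where
  "inflated G G' \<longleftrightarrow>
     players G \<subseteq> players G' \<and>
     (\<forall>i\<in>players G. strats G i \<subseteq> strats G' i) \<and>
     (\<forall>i\<in>players G. \<forall>s\<in>profiles G. \<forall>s'\<in>profiles G'.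
        (\<forall>j\<in>players G. s j = s' j) \<longrightarrow> payoff G i s = payoff G' i s') \<and>
     (\<forall>\<sigma>\<in>nash_eq G. \<exists>\<sigma>'\<in>nash_eq G'. compatible G G' \<sigma> \<sigma>') \<and>
     (\<forall>\<sigma>'\<in>nash_eq G'. \<exists>\<sigma>\<in>nash_eq G. compatible G G' \<sigma> \<sigma>')"

end

theory Submission
  imports Defs
begin

theorem proposition1:
  fixes G G' :: "('p, 's) game" and i :: 'p and \<sigma> \<sigma>' :: "'p \<Rightarrow> 's \<Rightarrow> real"
  assumes "nf_game G" and "nf_game G'"
    and "inflated G G'"
    and "i \<in> players G"
    and "mixed_profile G \<sigma>" and "mixed_profile G' \<sigma>'"
    and "compatible G G' \<sigma> \<sigma>'"
  shows "exp_payoff G i \<sigma> = exp_payoff G' i \<sigma>'"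
proof -
  define N where "N = players G"
  define N' where "N' = players G'"
  define S where "S = strats G"
  define S' where "S' = strats G'"
  define D where "D = N' - N"
  define P where "P = payoff G i"
  define P' where "P' = payoff G' i"
  have fN': "finite N'" and fS': "\<And>k. k \<in> N' \<Longrightarrow> finite (S' k)"
    using assms(2) unfolding nf_game_def N'_def S'_def by auto
  have NN': "N \<subseteq> N'" and SS': "\<And>k. k \<in> N \<Longrightarrow> S k \<subseteq> S' k"
    using assms(3) unfolding inflated_def N_def N'_def S_def S'_def by auto
  have fN: "finite N" using fN' NN' finite_subset by blast
  have fS: "finite (S k)" if "k \<in> N" for k
    using finite_subset[OF SS'[OF that] fS'[of k]] NN' that by auto
  have inf3: "\<forall>i\<in>players G. \<forall>s\<in>profiles G. \<forall>s'\<in>profiles G'.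
        (\<forall>j\<in>players G. s j = s' j) \<longrightarrow> payoff G i s = payoff G' i s'"
    using assms(3) unfolding inflated_def by (elim conjE) assumption
  have pay: "P s = P' s'" if "s \<in> PiE N S" "s' \<in> PiE N' S'" "\<forall>j\<in>N. s j = s' j" for s s'
    using inf3 assms(4) that unfolding N_def N'_def S_def S'_def P_def P'_def profiles_def
    by simp
  have eq: "\<sigma>' k j = \<sigma> k j" if "k \<in> N" "j \<in> S k" for k j
  proof -
    have "k \<in> players G \<inter> players G'" "j \<in> strats G k \<inter> strats G' k"
      using that NN' SS' unfolding N_def N'_def S_def S'_def by auto
    then show ?thesis using assms(7) unfolding compatible_def by simp
  qed
  have nn': "\<And>k j. k \<in> N' \<Longrightarrow> j \<in> S' k \<Longrightarrow> \<sigma>' k j \<ge> 0"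
    and s1': "\<And>k. k \<in> N' \<Longrightarrow> (\<Sum>j\<in>S' k. \<sigma>' k j) = 1"
    using assms(6) unfolding mixed_profile_def mixed_strategy_def N'_def S'_def by auto
  have s1: "\<And>k. k \<in> N \<Longrightarrow> (\<Sum>j\<in>S k. \<sigma> k j) = 1"
    using assms(5) unfolding mixed_profile_def mixed_strategy_def N_def S_def by auto
  have z: "\<sigma>' k j = 0" if k: "k \<in> N" and j: "j \<in> S' k - S k" for k j
  proof -
    have kk: "k \<in> N'" using k NN' by auto
    have "(\<Sum>j\<in>S' k. \<sigma>' k j) = (\<Sum>j\<in>S k. \<sigma>' k j) + (\<Sum>j\<in>S' k - S k. \<sigma>' k j)"
      using fS'[OF kk] SS'[OF k] by (metis add.commute sum.subset_diff)
    also have "(\<Sum>j\<in>S k. \<sigma>' k j) = 1" using s1[OF k] eq[OF k] by simp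
    finally have "(\<Sum>j\<in>S' k - S k. \<sigma>' k j) = 0" using s1'[OF kk] by simp
    then have "\<forall>j\<in>S' k - S k. \<sigma>' k j = 0"
      using sum_nonneg_eq_0_iff[of "S' k - S k" "\<sigma>' k"] fS'[OF kk] nn'[OF kk] by auto
    then show ?thesis using j by auto
  qed
  define T where "T = (\<lambda>k. if k \<in> N then S k else S' k)"
  define A where "A = PiE N' T"
  define g where "g = (\<lambda>s. P' s * (\<Prod>k\<in>N'. \<sigma>' k (s k)))"
  have AS: "A \<subseteq> PiE N' S'"
    unfolding A_def T_def using SS' by (auto simp: PiE_def Pi_def)
  have "exp_payoff G' i \<sigma>' = sum g (PiE N' S')"
    unfolding exp_payoff_def g_def P'_def N'_def S'_def profiles_def by simp
  also have "\<dots> = sum g A"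
  proof (rule sum.mono_neutral_right)
    show "finite (PiE N' S')" using fN' fS' by (simp add: finite_PiE)
    show "A \<subseteq> PiE N' S'" by (rule AS)
    show "\<forall>s\<in>PiE N' S' - A. g s = 0"
    proof
      fix s assume s: "s \<in> PiE N' S' - A"
      then obtain k where k: "k \<in> N'" "s k \<notin> T k"
        unfolding A_def by (auto simp: PiE_def Pi_def)
      then have kN: "k \<in> N" unfolding T_def using s by (auto simp: PiE_def Pi_def split: if_splits)
      then have "s k \<in> S' k - S k" using k s unfolding T_def by (auto simp: PiE_def Pi_def split: if_splits)
      then have "\<sigma>' k (s k) = 0" using z kN by auto
      then have "(\<Prod>k\<in>N'. \<sigma>' k (s k)) = 0" using fN' k(1) by (metis prod_zero_iff)
      then show "g s = 0" unfolding g_def by simp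
    qed
  qed
  also have "\<dots> = (\<Sum>(s,t)\<in>PiE N S \<times> PiE D S'.
        P s * (\<Prod>k\<in>N. \<sigma> k (s k)) * (\<Prod>k\<in>D. \<sigma>' k (t k)))"
  proof (rule sum.reindex_bij_witness[where i = "\<lambda>(s,t) k. if k \<in> N then s k else t k"
        and j = "\<lambda>a. (restrict a N, restrict a D)"])
    fix a assume a: "a \<in> A"
    show "(case (restrict a N, restrict a D) of (s, t) \<Rightarrow> \<lambda>k. if k \<in> N then s k else t k) = a"
      using a NN' unfolding A_def D_def by (auto simp: PiE_def extensional_def)
    show "(restrict a N, restrict a D) \<in> PiE N S \<times> PiE D S'"
      using a NN' unfolding A_def D_def T_def by (auto simp: PiE_def Pi_def)
    have an: "restrict a N \<in> PiE N S"
      using a NN' unfolding A_def T_def by (auto simp: PiE_def Pi_def)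
    have a': "a \<in> PiE N' S'" using a AS by auto
    have "P (restrict a N) = P' a" using pay[OF an a'] by simp
    moreover have "(\<Prod>k\<in>N'. \<sigma>' k (a k)) = (\<Prod>k\<in>N. \<sigma>' k (a k)) * (\<Prod>k\<in>D. \<sigma>' k (a k))"
      unfolding D_def using fN' NN' by (metis prod.subset_diff mult.commute)
    moreover have "(\<Prod>k\<in>N. \<sigma>' k (a k)) = (\<Prod>k\<in>N. \<sigma> k (a k))"
      using a NN' eq unfolding A_def T_def by (intro prod.cong) (auto simp: PiE_def Pi_def)
    ultimately show "(case (restrict a N, restrict a D) of
           (s, t) \<Rightarrow> P s * (\<Prod>k\<in>N. \<sigma> k (s k)) * (\<Prod>k\<in>D. \<sigma>' k (t k))) = g a"
      unfolding g_def by simp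
  next
    fix b assume b: "b \<in> PiE N S \<times> PiE D S'"
    then obtain s t where st: "b = (s,t)" "s \<in> PiE N S" "t \<in> PiE D S'" by auto
    show "(case b of (s, t) \<Rightarrow> \<lambda>k. if k \<in> N then s k else t k) \<in> A"
      using st NN' unfolding A_def T_def D_def by (auto simp: PiE_def Pi_def extensional_def)
    show "(restrict (case b of (s, t) \<Rightarrow> \<lambda>k. if k \<in> N then s k else t k) N,
           restrict (case b of (s, t) \<Rightarrow> \<lambda>k. if k \<in> N then s k else t k) D) = b"
      using st unfolding D_def by (auto simp: PiE_def extensional_def intro!: ext)
  qed
  also have "\<dots> = (\<Sum>s\<in>PiE N S. \<Sum>t\<in>PiE D S'.
        P s * (\<Prod>k\<in>N. \<sigma> k (s k)) * (\<Prod>k\<in>D. \<sigma>' k (t k)))"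
    by (rule sum.cartesian_product[symmetric])
  also have "\<dots> = (\<Sum>s\<in>PiE N S. P s * (\<Prod>k\<in>N. \<sigma> k (s k)) * (\<Sum>t\<in>PiE D S'. \<Prod>k\<in>D. \<sigma>' k (t k)))"
    by (simp add: sum_distrib_left)
  also have "(\<Sum>t\<in>PiE D S'. \<Prod>k\<in>D. \<sigma>' k (t k)) = (\<Prod>k\<in>D. \<Sum>j\<in>S' k. \<sigma>' k j)"
    using fN' fS' unfolding D_def by (intro prod_sum_PiE[symmetric]) auto
  also have "\<dots> = 1" using s1' unfolding D_def by simp
  finally show ?thesis
    unfolding exp_payoff_def P_def N_def S_def profiles_def by simp
qed

end
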